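(* A $\mathsf V$-functor $m:M\to X$ is L-dense if, and only if, for all $\mathsf V$-functors $f,g:X\to Y$ with $f\cdot m=g\cdot m$ one has $f\cong g$.
   Context: Let $\mathsf V=(\mathsf V,\otimes,k)$ be a commutative unital quantale (complete lattice with commutative associative $\otimes$ having neutral element $k$, with $u\otimes(-)$ preserving suprema). A $\mathsf V$-category $(X,a)$ is a set with $a:X\times X\to\mathsf V$ such that $k\le a(x,x)$ and $a(x,y)\otimes a(y,z)\le a(x,z)$; a $\mathsf V$-functor $f:(X,a)\to(Y,b)$ satisfies $a(x,y)\le b(f(x),f(y))$. For $\mathsf V$-functors $f,g:X\to(Y,b)$, $f\cong g$ means $k\le b(f(x),g(x))$ and $k\le b(g(x),f(x))$ for all $x\in X$. A $\mathsf V$-functor $m:(M,c)\to(X,a)$ is L-dense if $a(x,x')=\bigvee_{z\in M}a(x,m(z))\otimes a(m(z),x')$ for all $x,x'\in X$. *)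

theory Defs
  imports Main
begin

definition quantale :: "('v::complete_lattice \<Rightarrow> 'v \<Rightarrow> 'v) \<Rightarrow> 'v \<Rightarrow> bool" where
  "quantale t k \<longleftrightarrow>
     (\<forall>u v w. t (t u v) w = t u (t v w)) \<and>
     (\<forall>u v. t u v = t v u) \<and>
     (\<forall>u. t k u = u) \<and>
     (\<forall>u S. t u (Sup S) = Sup (t u ` S))"

definition vcat :: "('v::complete_lattice \<Rightarrow> 'v \<Rightarrow> 'v) \<Rightarrow> 'v \<Rightarrow> 'x set \<Rightarrow> ('x \<Rightarrow> 'x \<Rightarrow> 'v) \<Rightarrow> bool" where
  "vcat t k X a \<longleftrightarrow>
     (\<forall>x\<in>X. k \<le> a x x) \<and>
     (\<forall>x\<in>X. \<forall>y\<in>X. \<forall>z\<in>X. t (a x y) (a y z) \<le> a x z)"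

definition vfun :: "'x set \<Rightarrow> ('x \<Rightarrow> 'x \<Rightarrow> 'v::complete_lattice) \<Rightarrow> 'y set \<Rightarrow> ('y \<Rightarrow> 'y \<Rightarrow> 'v) \<Rightarrow> ('x \<Rightarrow> 'y) \<Rightarrow> bool" where
  "vfun X a Y b f \<longleftrightarrow> f ` X \<subseteq> Y \<and> (\<forall>x\<in>X. \<forall>y\<in>X. a x y \<le> b (f x) (f y))"

definition viso :: "'v::complete_lattice \<Rightarrow> 'x set \<Rightarrow> ('y \<Rightarrow> 'y \<Rightarrow> 'v) \<Rightarrow> ('x \<Rightarrow> 'y) \<Rightarrow> ('x \<Rightarrow> 'y) \<Rightarrow> bool" where
  "viso k X b f g \<longleftrightarrow> (\<forall>x\<in>X. k \<le> b (f x) (g x) \<and> k \<le> b (g x) (f x))"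

definition Ldense :: "('v::complete_lattice \<Rightarrow> 'v \<Rightarrow> 'v) \<Rightarrow> 'm set \<Rightarrow> 'x set \<Rightarrow> ('x \<Rightarrow> 'x \<Rightarrow> 'v) \<Rightarrow> ('m \<Rightarrow> 'x) \<Rightarrow> bool" where
  "Ldense t M X a m \<longleftrightarrow> (\<forall>x\<in>X. \<forall>x'\<in>X. a x x' = (SUP z\<in>M. t (a x (m z)) (a (m z) x')))"

end

theory Submission
  imports Defs
begin

definition hom :: "('v::complete_lattice \<Rightarrow> 'v \<Rightarrow> 'v) \<Rightarrow> 'v \<Rightarrow> 'v \<Rightarrow> 'v" where
  "hom t u v = Sup {w. t u w \<le> v}"

lemma q_mono:
  assumes q: "quantale t k" and "v \<le> w" shows "t u v \<le> t u w"
proof -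
  have "t u (Sup {v, w}) = Sup (t u ` {v, w})" using q unfolding quantale_def by blast
  moreover have "Sup {v, w} = w" using assms(2) by (simp add: sup_absorb2)
  ultimately have "t u w = sup (t u v) (t u w)" by simp
  thus ?thesis by (metis sup.cobounded1)
qed

lemma q_mono2:
  assumes q: "quantale t k" and "u \<le> u'" "v \<le> v'" shows "t u v \<le> t u' v'"
proof -
  have c: "\<And>x y. t x y = t y x" using q unfolding quantale_def by blast
  have "t u v \<le> t u v'" using q_mono[OF q assms(3)] .
  also have "\<dots> = t v' u" by (rule c)
  also have "\<dots> \<le> t v' u'" using q_mono[OF q assms(2)] .
  also have "\<dots> = t u' v'" by (rule c)
  finally show ?thesis .
qed

lemma q_bot: assumes q: "quantale t k" shows "t u bot = bot"
proof -
  have "t u (Sup {}) = Sup (t u ` {})" using q unfolding quantale_def by blast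
  thus ?thesis by simp
qed

lemma hom_eval: assumes q: "quantale t k" shows "t u (hom t u v) \<le> v"
proof -
  have "t u (hom t u v) = Sup (t u ` {w. t u w \<le> v})" using q unfolding quantale_def hom_def by blast
  also have "\<dots> \<le> v" by (auto intro: Sup_least)
  finally show ?thesis .
qed

lemma hom_intro: "t u w \<le> v \<Longrightarrow> w \<le> hom t u v"
  unfolding hom_def by (auto intro: Sup_upper)

lemma hom_vcat: assumes q: "quantale t k" shows "vcat t k UNIV (hom t)"
  unfolding vcat_def
proof (intro conjI ballI)
  fix u :: 'a
  have "t k u = u" using q unfolding quantale_def by blast
  moreover have "t u k = t k u" using q unfolding quantale_def by blast
  ultimately show "k \<le> hom t u u" by (intro hom_intro) simp
next
  fix u v w :: 'a
  have as: "\<And>x y z. t (t x y) z = t x (t y z)" using q unfolding quantale_def by blast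
  have "t u (t (hom t u v) (hom t v w)) = t (t u (hom t u v)) (hom t v w)" by (simp add: as)
  also have "\<dots> \<le> t v (hom t v w)" using q_mono2[OF q hom_eval[OF q] order_refl] .
  also have "\<dots> \<le> w" by (rule hom_eval[OF q])
  finally show "t (hom t u v) (hom t v w) \<le> hom t u w" by (rule hom_intro)
qed

theorem mainTheorem5:
  fixes t :: "'v::complete_lattice \<Rightarrow> 'v \<Rightarrow> 'v" and k :: 'v
    and M :: "'m set" and c :: "'m \<Rightarrow> 'm \<Rightarrow> 'v"
    and X :: "'x set" and a :: "'x \<Rightarrow> 'x \<Rightarrow> 'v"
    and m :: "'m \<Rightarrow> 'x"
  assumes "quantale t k" and "vcat t k M c" and "vcat t k X a" and "vfun M c X a m"
  shows "(Ldense t M X a m \<longrightarrow>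
            (\<forall>(Y :: 'y set) b f g. vcat t k Y b \<longrightarrow> vfun X a Y b f \<longrightarrow> vfun X a Y b g \<longrightarrow>
               (\<forall>z\<in>M. f (m z) = g (m z)) \<longrightarrow> viso k X b f g))
       \<and> ((\<forall>(Y :: 'v set) b f g. vcat t k Y b \<longrightarrow> vfun X a Y b f \<longrightarrow> vfun X a Y b g \<longrightarrow>
               (\<forall>z\<in>M. f (m z) = g (m z)) \<longrightarrow> viso k X b f g)
            \<longrightarrow> Ldense t M X a m)"
proof -
  note q = assms(1)
  have as: "\<And>x y z. t (t x y) z = t x (t y z)" using q unfolding quantale_def by blast
  have cm: "\<And>x y. t x y = t y x" using q unfolding quantale_def by blast
  have un: "\<And>x. t k x = x" using q unfolding quantale_def by blast
  have sp: "\<And>u S. t u (Sup S) = Sup (t u ` S)" using q unfolding quantale_def by blast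
  have aref: "\<And>x. x \<in> X \<Longrightarrow> k \<le> a x x" and atr: "\<And>x y z. x \<in> X \<Longrightarrow> y \<in> X \<Longrightarrow> z \<in> X \<Longrightarrow> t (a x y) (a y z) \<le> a x z"
    using assms(3) unfolding vcat_def by blast+
  have mX: "\<And>z. z \<in> M \<Longrightarrow> m z \<in> X" using assms(4) unfolding vfun_def by blast
  have part1: "viso k X b f g" if ld: "Ldense t M X a m" and Y: "vcat t k Y b" and f: "vfun X a Y b f"
    and g: "vfun X a Y b g" and eq: "\<forall>z\<in>M. f (m z) = g (m z)" for Y :: "'y set" and b f g
  proof -
    have btr: "\<And>x y z. x \<in> Y \<Longrightarrow> y \<in> Y \<Longrightarrow> z \<in> Y \<Longrightarrow> t (b x y) (b y z) \<le> b x z"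
      using Y unfolding vcat_def by blast
    have key: "k \<le> b (f x) (g x)" if x: "x \<in> X" and f: "vfun X a Y b f" and g: "vfun X a Y b g"
      and eq: "\<forall>z\<in>M. f (m z) = g (m z)" for f g x
    proof -
      have "k \<le> a x x" using aref x by blast
      also have "\<dots> = (SUP z\<in>M. t (a x (m z)) (a (m z) x))" using ld x unfolding Ldense_def by blast
      also have "\<dots> \<le> b (f x) (g x)"
      proof (rule SUP_least)
        fix z assume z: "z \<in> M"
        have fa: "\<forall>x\<in>X. \<forall>y\<in>X. a x y \<le> b (f x) (f y)" and fY: "f ` X \<subseteq> Y" using f unfolding vfun_def by auto
        have ga: "\<forall>x\<in>X. \<forall>y\<in>X. a x y \<le> b (g x) (g y)" and gY: "g ` X \<subseteq> Y" using g unfolding vfun_def by auto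
        have "a x (m z) \<le> b (f x) (f (m z))" using fa x mX[OF z] by blast
        hence "a x (m z) \<le> b (f x) (g (m z))" using eq z by simp
        moreover have "a (m z) x \<le> b (g (m z)) (g x)" using ga x mX[OF z] by blast
        ultimately have "t (a x (m z)) (a (m z) x) \<le> t (b (f x) (g (m z))) (b (g (m z)) (g x))"
          by (rule q_mono2[OF q])
        also have "\<dots> \<le> b (f x) (g x)" using btr fY gY x mX[OF z] by blast
        finally show "t (a x (m z)) (a (m z) x) \<le> b (f x) (g x)" .
      qed
      finally show ?thesis .
    qed
    have eq': "\<forall>z\<in>M. g (m z) = f (m z)" using eq by simp
    show ?thesis unfolding viso_def using key[OF _ f g eq] key[OF _ g f eq'] by blast
  qed
  have part2: "Ldense t M X a m" if H: "\<forall>(Y :: 'v set) b f g. vcat t k Y b \<longrightarrow> vfun X a Y b f \<longrightarrow> vfun X a Y b g \<longrightarrow>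
               (\<forall>z\<in>M. f (m z) = g (m z)) \<longrightarrow> viso k X b f g"
    unfolding Ldense_def
  proof (intro ballI)
    fix x x' assume x: "x \<in> X" and x': "x' \<in> X"
    define f where "f = (\<lambda>y. a x y)"
    define g where "g = (\<lambda>y. SUP z\<in>M. t (a x (m z)) (a (m z) y))"
    have vf: "vfun X a UNIV (hom t) f" unfolding vfun_def f_def
    proof (intro conjI ballI hom_intro)
      fix y z assume "y \<in> X" "z \<in> X"
      thus "t (a x y) (a y z) \<le> a x z" using atr x by blast
    qed simp
    have vg: "vfun X a UNIV (hom t) g" unfolding vfun_def g_def
    proof (intro conjI ballI hom_intro)
      fix y w assume y: "y \<in> X" and w: "w \<in> X"
      have "t (SUP z\<in>M. t (a x (m z)) (a (m z) y)) (a y w) = t (a y w) (SUP z\<in>M. t (a x (m z)) (a (m z) y))"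
        by (rule cm)
      also have "\<dots> = (SUP z\<in>M. t (a y w) (t (a x (m z)) (a (m z) y)))"
        using sp[of "a y w" "(\<lambda>z. t (a x (m z)) (a (m z) y)) ` M"] by (simp only: image_image)
      also have "\<dots> \<le> (SUP z\<in>M. t (a x (m z)) (a (m z) w))"
      proof (rule SUP_mono)
        fix z assume z: "z \<in> M"
        have "t (a y w) (t (a x (m z)) (a (m z) y)) = t (a x (m z)) (t (a (m z) y) (a y w))"
          using cm[of "a y w" "t (a x (m z)) (a (m z) y)"] as[of "a x (m z)" "a (m z) y" "a y w"] by simp
        also have "\<dots> \<le> t (a x (m z)) (a (m z) w)"
          using q_mono[OF q atr[OF mX[OF z] y w]] .
        finally show "\<exists>z'\<in>M. t (a y w) (t (a x (m z)) (a (m z) y)) \<le> t (a x (m z')) (a (m z') w)"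
          using z by blast
      qed
      finally show "t (SUP z\<in>M. t (a x (m z)) (a (m z) y)) (a y w) \<le> (SUP z\<in>M. t (a x (m z)) (a (m z) w))" .
    qed simp
    have gle: "g y \<le> f y" if y: "y \<in> X" for y
      unfolding g_def f_def by (rule SUP_least) (use atr x mX y in blast)
    have eq: "\<forall>z\<in>M. f (m z) = g (m z)"
    proof
      fix z assume z: "z \<in> M"
      have "f (m z) = t (a x (m z)) k" unfolding f_def using un[of "a x (m z)"] cm[of k "a x (m z)"] by simp
      also have "\<dots> \<le> t (a x (m z)) (a (m z) (m z))" using q_mono[OF q aref[OF mX[OF z]]] .
      also have "\<dots> \<le> g (m z)" unfolding g_def using z by (rule SUP_upper2) simp
      finally show "f (m z) = g (m z)" using gle[OF mX[OF z]] by (rule order.antisym)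
    qed
    have "viso k X (hom t) f g" using H[rule_format, OF hom_vcat[OF q] vf vg] eq by blast
    hence "k \<le> hom t (f x') (g x')" using x' unfolding viso_def by blast
    hence "t (f x') k \<le> t (f x') (hom t (f x') (g x'))" by (rule q_mono[OF q])
    also have "\<dots> \<le> g x'" by (rule hom_eval[OF q])
    finally have c1: "t (f x') k \<le> g x'" .
    have "t (f x') k = f x'" using un[of "f x'"] cm[of k "f x'"] by simp
    hence "f x' \<le> g x'" using c1 by simp
    thus "a x x' = (SUP z\<in>M. t (a x (m z)) (a (m z) x'))"
      using gle[OF x'] unfolding f_def g_def by (rule order.antisym)
  qed
  show ?thesis using part1 part2 by blast
qed

end
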